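(* In the discrete setting of the context, consider the semi-discrete scheme with free-surface penalty terms $$\widetilde{\mathbf{P}}^{-1}\frac{d\mathbf{Q}}{dt}=\sum_{\xi}D_{-\xi}\,\mathbf{F}_\xi(\mathbf{Q})+\sum_{\xi}\mathbf{B}^h_\xi(\mathbf{Q})+\sum_{\xi}\big(\mathbf{SAT}_{\xi,0}+\mathbf{SAT}_{\xi,n_\xi}\big),$$ where, for each $\xi\in\{q,r,s\}$, $\mathbf{SAT}_{\xi,0}$ vanishes except at grid points with $\xi$-index $0$, where it equals $\frac{1}{h^{(\xi)}_0}J\sqrt{\xi_x^2+\xi_y^2+\xi_z^2}\,(T_x,T_y,T_z,0,0,0,0,0,0)^T$, and $\mathbf{SAT}_{\xi,n_\xi}$ vanishes except at grid points with $\xi$-index $n_\xi$, where it equals $-\frac{1}{h^{(\xi)}_{n_\xi}}J\sqrt{\xi_x^2+\xi_y^2+\xi_z^2}\,(T_x,T_y,T_z,0,0,0,0,0,0)^T$; here $\mathbf{T}=\boldsymbol\sigma_{\mathrm{mat}}\mathbf{n}$, $\mathbf{n}=(\xi_x,\xi_y,\xi_z)^T/\sqrt{\xi_x^2+\xi_y^2+\xi_z^2}$ (so $J\sqrt{\xi_x^2+\xi_y^2+\xi_z^2}\,\mathbf{T}$ equals the first three entries of $\mathbf{F}_\xi(\mathbf{Q})$). Then every differentiable solution satisfies $\dfrac{dE_h}{dt}=0$.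
   Context: Discrete setting: for $\xi\in\{q,r,s\}$ fix $n_\xi\ge1$, a diagonal matrix $H_\xi=\mathrm{diag}(h^{(\xi)}_0,\dots,h^{(\xi)}_{n_\xi})$ with positive entries, and real $(n_\xi+1)\times(n_\xi+1)$ matrices $D_{+\xi},D_{-\xi}$ with $(D_{+\xi}f)^TH_\xi g+f^TH_\xi(D_{-\xi}g)=f_{n_\xi}g_{n_\xi}-f_0g_0$ for all $f,g\in\mathbb{R}^{n_\xi+1}$. A 3D grid function $f=(f_{ijk})$ has $0\le i\le n_q$, $0\le j\le n_r$, $0\le k\le n_s$; $D_{\pm q}$ acts on the index $i$, i.e. $(D_{\pm q}f)_{ijk}=\sum_{i'}(D_{\pm q})_{ii'}f_{i'jk}$, and similarly $D_{\pm r}$ on $j$ and $D_{\pm s}$ on $k$; applied to vector-valued grid functions they act componentwise. Given are grid functions $J_{ijk}>0$, for each $\xi$ metric values $(\xi_x,\xi_y,\xi_z)_{ijk}\in\mathbb{R}^3\setminus\{0\}$, density $\rho_{ijk}>0$ and symmetric positive definite $6\times6$ compliance matrices $\mathbf{S}_{ijk}$; $\widetilde{\mathbf{P}}^{-1}_{ijk}=J_{ijk}\,\mathrm{diag}(\rho_{ijk}I_3,\mathbf{S}_{ijk})$. The unknown is $\mathbf{Q}_{ijk}=(\mathbf{v},\boldsymbol\sigma)_{ijk}$ with $\mathbf{v}=(v_x,v_y,v_z)$, $\boldsymbol\sigma=(\sigma_{xx},\sigma_{yy},\sigma_{zz},\sigma_{xy},\sigma_{xz},\sigma_{yz})$, and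 $\boldsymbol\sigma_{\mathrm{mat}}$ the symmetric $3\times3$ stress matrix. Pointwise flux: $\mathbf{F}_\xi(\mathbf{Q})$ has first three entries $J(\xi_x\sigma_{xx}+\xi_y\sigma_{xy}+\xi_z\sigma_{xz})$, $J(\xi_x\sigma_{xy}+\xi_y\sigma_{yy}+\xi_z\sigma_{yz})$, $J(\xi_x\sigma_{xz}+\xi_y\sigma_{yz}+\xi_z\sigma_{zz})$ and last six entries $0$. Discrete non-conservative term: with $w_\alpha=D_{+\xi}v_\alpha$, $\mathbf{B}^h_\xi(\mathbf{Q})$ has first three entries $0$ and entries 4–9 equal to $J\xi_xw_x$, $J\xi_yw_y$, $J\xi_zw_z$, $J(\xi_yw_x+\xi_xw_y)$, $J(\xi_zw_x+\xi_xw_z)$, $J(\xi_zw_y+\xi_yw_z)$. Discrete energy: $E_h=\frac12\sum_{i,j,k}h^{(q)}_ih^{(r)}_jh^{(s)}_k\,\mathbf{Q}_{ijk}^T\widetilde{\mathbf{P}}^{-1}_{ijk}\mathbf{Q}_{ijk}$. *)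

theory Defs
  imports Complex_Main
begin

text \<open>One-dimensional grid functions on indices 0..n are functions nat => real; matrices are nat => nat => real.
 3D grid functions: nat => nat => nat => real (indices i j k).
 State vector components (index c < 9): 0 v_x, 1 v_y, 2 v_z, 3 sigma_xx, 4 sigma_yy, 5 sigma_zz,
 6 sigma_xy, 7 sigma_xz, 8 sigma_yz.
 Metric values (xi_x, xi_y, xi_z) at a point are a function nat => real on indices 0,1,2.\<close>

type_synonym mat = "nat \<Rightarrow> nat \<Rightarrow> real"
type_synonym grid = "nat \<Rightarrow> nat \<Rightarrow> nat \<Rightarrow> real"

text \<open>Summation-by-parts property of (H, D_plus, D_minus) with H = diag(h_0..h_n).\<close>
definition SBP :: "nat \<Rightarrow> (nat \<Rightarrow> real) \<Rightarrow> mat \<Rightarrow> mat \<Rightarrow> bool" where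
  "SBP n h Dp Dm \<longleftrightarrow> (\<forall>i\<le>n. h i > 0) \<and>
     (\<forall>f g :: nat \<Rightarrow> real.
        (\<Sum>i\<le>n. (\<Sum>l\<le>n. Dp i l * f l) * h i * g i)
      + (\<Sum>i\<le>n. f i * h i * (\<Sum>l\<le>n. Dm i l * g l))
      = f n * g n - f 0 * g 0)"

definition Dq :: "nat \<Rightarrow> mat \<Rightarrow> grid \<Rightarrow> grid" where
  "Dq n D f i j k = (\<Sum>l\<le>n. D i l * f l j k)"
definition Dr :: "nat \<Rightarrow> mat \<Rightarrow> grid \<Rightarrow> grid" where
  "Dr n D f i j k = (\<Sum>l\<le>n. D j l * f i l k)"
definition Ds :: "nat \<Rightarrow> mat \<Rightarrow> grid \<Rightarrow> grid" where
  "Ds n D f i j k = (\<Sum>l\<le>n. D k l * f i j l)"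

definition flux :: "real \<Rightarrow> (nat \<Rightarrow> real) \<Rightarrow> (nat \<Rightarrow> real) \<Rightarrow> nat \<Rightarrow> real" where
  "flux J m u c =
     (if c = 0 then J * (m 0 * u 3 + m 1 * u 6 + m 2 * u 7)
      else if c = 1 then J * (m 0 * u 6 + m 1 * u 4 + m 2 * u 8)
      else if c = 2 then J * (m 0 * u 7 + m 1 * u 8 + m 2 * u 5)
      else 0)"

text \<open>Pointwise non-conservative term B^h_xi, given J, m and w_alpha = (D_plus_xi v_alpha) at that point.\<close>
definition Bterm :: "real \<Rightarrow> (nat \<Rightarrow> real) \<Rightarrow> (nat \<Rightarrow> real) \<Rightarrow> nat \<Rightarrow> real" where
  "Bterm J m w c =
     (if c = 3 then J * m 0 * w 0
      else if c = 4 then J * m 1 * w 1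
      else if c = 5 then J * m 2 * w 2
      else if c = 6 then J * (m 1 * w 0 + m 0 * w 1)
      else if c = 7 then J * (m 2 * w 0 + m 0 * w 2)
      else if c = 8 then J * (m 2 * w 1 + m 1 * w 2)
      else 0)"

definition sigma_mat :: "(nat \<Rightarrow> real) \<Rightarrow> nat \<Rightarrow> nat \<Rightarrow> real" where
  "sigma_mat u a b =
     (if a = 0 \<and> b = 0 then u 3 else if a = 1 \<and> b = 1 then u 4 else if a = 2 \<and> b = 2 then u 5
      else if {a, b} = {0, 1} then u 6 else if {a, b} = {0, 2} then u 7 else if {a, b} = {1, 2} then u 8
      else 0)"

definition metric_norm :: "(nat \<Rightarrow> real) \<Rightarrow> real" where
  "metric_norm m = sqrt ((m 0)\<^sup>2 + (m 1)\<^sup>2 + (m 2)\<^sup>2)"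

definition normal :: "(nat \<Rightarrow> real) \<Rightarrow> nat \<Rightarrow> real" where
  "normal m a = m a / metric_norm m"

definition traction :: "(nat \<Rightarrow> real) \<Rightarrow> (nat \<Rightarrow> real) \<Rightarrow> nat \<Rightarrow> real" where
  "traction m u a = (\<Sum>b<3. sigma_mat u a b * normal m b)"

definition sat_vec :: "real \<Rightarrow> (nat \<Rightarrow> real) \<Rightarrow> (nat \<Rightarrow> real) \<Rightarrow> nat \<Rightarrow> real" where
  "sat_vec J m u c = (if c < 3 then J * metric_norm m * traction m u c else 0)"

text \<open>SAT_{xi,0} + SAT_{xi,n_xi} at a point whose xi-index is idx.\<close>
definition sat :: "nat \<Rightarrow> (nat \<Rightarrow> real) \<Rightarrow> nat \<Rightarrow> real \<Rightarrow> (nat \<Rightarrow> real) \<Rightarrow> (nat \<Rightarrow> real) \<Rightarrow> nat \<Rightarrow> real" where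
  "sat n h idx J m u c =
     (if idx = 0 then (1 / h 0) * sat_vec J m u c else 0)
   + (if idx = n then - ((1 / h n) * sat_vec J m u c) else 0)"

definition Pinv_apply :: "real \<Rightarrow> real \<Rightarrow> mat \<Rightarrow> (nat \<Rightarrow> real) \<Rightarrow> nat \<Rightarrow> real" where
  "Pinv_apply J rho S u c =
     (if c < 3 then J * rho * u c else J * (\<Sum>c'<6. S (c - 3) c' * u (c' + 3)))"

definition rhs ::
  "nat \<Rightarrow> nat \<Rightarrow> nat \<Rightarrow>
   (nat \<Rightarrow> real) \<Rightarrow> (nat \<Rightarrow> real) \<Rightarrow> (nat \<Rightarrow> real) \<Rightarrow>
   mat \<Rightarrow> mat \<Rightarrow> mat \<Rightarrow> mat \<Rightarrow> mat \<Rightarrow> mat \<Rightarrow> grid \<Rightarrow>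
   (nat \<Rightarrow> nat \<Rightarrow> nat \<Rightarrow> nat \<Rightarrow> real) \<Rightarrow> (nat \<Rightarrow> nat \<Rightarrow> nat \<Rightarrow> nat \<Rightarrow> real) \<Rightarrow>
   (nat \<Rightarrow> nat \<Rightarrow> nat \<Rightarrow> nat \<Rightarrow> real) \<Rightarrow>
   (nat \<Rightarrow> nat \<Rightarrow> nat \<Rightarrow> nat \<Rightarrow> real) \<Rightarrow> nat \<Rightarrow> nat \<Rightarrow> nat \<Rightarrow> nat \<Rightarrow> real" where
  "rhs nq nr ns hq hr hs Dpq Dmq Dpr Dmr Dps Dms J mq mr ms Q i j k c =
       Dq nq Dmq (\<lambda>i j k. flux (J i j k) (mq i j k) (Q i j k) c) i j k
     + Dr nr Dmr (\<lambda>i j k. flux (J i j k) (mr i j k) (Q i j k) c) i j k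
     + Ds ns Dms (\<lambda>i j k. flux (J i j k) (ms i j k) (Q i j k) c) i j k
     + Bterm (J i j k) (mq i j k) (\<lambda>a. Dq nq Dpq (\<lambda>i j k. Q i j k a) i j k) c
     + Bterm (J i j k) (mr i j k) (\<lambda>a. Dr nr Dpr (\<lambda>i j k. Q i j k a) i j k) c
     + Bterm (J i j k) (ms i j k) (\<lambda>a. Ds ns Dps (\<lambda>i j k. Q i j k a) i j k) c
     + sat nq hq i (J i j k) (mq i j k) (Q i j k) c
     + sat nr hr j (J i j k) (mr i j k) (Q i j k) c
     + sat ns hs k (J i j k) (ms i j k) (Q i j k) c"

definition energy ::
  "nat \<Rightarrow> nat \<Rightarrow> nat \<Rightarrow> (nat \<Rightarrow> real) \<Rightarrow> (nat \<Rightarrow> real) \<Rightarrow> (nat \<Rightarrow> real) \<Rightarrow>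
   grid \<Rightarrow> grid \<Rightarrow> (nat \<Rightarrow> nat \<Rightarrow> nat \<Rightarrow> mat) \<Rightarrow>
   (nat \<Rightarrow> nat \<Rightarrow> nat \<Rightarrow> nat \<Rightarrow> real) \<Rightarrow> real" where
  "energy nq nr ns hq hr hs J rho S Q =
     1/2 * (\<Sum>i\<le>nq. \<Sum>j\<le>nr. \<Sum>k\<le>ns. hq i * hr j * hs k *
        (\<Sum>c<9. Q i j k c * Pinv_apply (J i j k) (rho i j k) (S i j k) (Q i j k) c))"

end

theory Submission
  imports Defs
begin
lemma sum9: "(\<Sum>c<9. f c) = (\<Sum>c<3. f c) + (\<Sum>a<6. f (a+3)) " for f :: "nat \<Rightarrow> real"
  by (simp add: eval_nat_numeral)
lemma flux_ge3: "c \<ge> 3 \<Longrightarrow> flux J m u c = 0" by (simp add: flux_def)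
lemma Bterm_flux: "(\<Sum>c<9. u c * Bterm J m w c) = (\<Sum>a<3. w a * flux J m u a)"
  by (simp add: eval_nat_numeral Bterm_def flux_def algebra_simps)
lemma sat_vec_flux: "metric_norm m \<noteq> 0 \<Longrightarrow> c < 3 \<Longrightarrow> sat_vec J m u c = flux J m u c"
  apply (simp add: sat_vec_def traction_def normal_def eval_nat_numeral sigma_mat_def flux_def)
  apply (auto simp: field_simps insert_commute doubleton_eq_iff)
  done
lemma mn: "\<exists>a<3. m a \<noteq> 0 \<Longrightarrow> metric_norm m \<noteq> 0"
  unfolding metric_norm_def
  by (auto simp: eval_nat_numeral less_Suc_eq add_nonneg_eq_0_iff)

definition Xd :: "nat \<Rightarrow> (nat \<Rightarrow> real) \<Rightarrow> nat \<Rightarrow> real \<Rightarrow> (nat \<Rightarrow> real) \<Rightarrow> (nat \<Rightarrow> real)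
   \<Rightarrow> (nat \<Rightarrow> real) \<Rightarrow> (nat \<Rightarrow> real) \<Rightarrow> real" where
  "Xd n h idx Jv m u DF w = (\<Sum>a<3. u a * DF a + w a * flux Jv m u a
     + u a * ((if idx = 0 then 1 / h 0 * flux Jv m u a else 0)
              + (if idx = n then - (1 / h n * flux Jv m u a) else 0)))"

lemma sbp1d:
  assumes sbp: "SBP n h Dp Dm" and n: "n \<ge> 1"
  shows "(\<Sum>i\<le>n. h i * (f i * (\<Sum>l\<le>n. Dm i l * g l) + (\<Sum>l\<le>n. Dp i l * f l) * g i
     + f i * ((if i = 0 then 1 / h 0 * g i else 0) + (if i = n then - (1 / h n * g i) else 0)))) = 0"
proof -
  from sbp have h: "h 0 > 0" "h n > 0" and e: "(\<Sum>i\<le>n. (\<Sum>l\<le>n. Dp i l * f l) * h i * g i)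
      + (\<Sum>i\<le>n. f i * h i * (\<Sum>l\<le>n. Dm i l * g l)) = f n * g n - f 0 * g 0"
    unfolding SBP_def by auto
  have s1: "(\<Sum>i\<le>n. h i * (f i * (if i = 0 then 1 / h 0 * g i else 0))) = f 0 * g 0"
    using h by (simp add: if_distrib cong: if_cong)
  have s2: "(\<Sum>i\<le>n. h i * (f i * (if i = n then - (1 / h n * g i) else 0))) = - (f n * g n)"
    using h by (simp add: if_distrib cong: if_cong)
  have "(\<Sum>i\<le>n. h i * (f i * (\<Sum>l\<le>n. Dm i l * g l) + (\<Sum>l\<le>n. Dp i l * f l) * g i
     + f i * ((if i = 0 then 1 / h 0 * g i else 0) + (if i = n then - (1 / h n * g i) else 0))))
     = (\<Sum>i\<le>n. (\<Sum>l\<le>n. Dp i l * f l) * h i * g i)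
      + (\<Sum>i\<le>n. f i * h i * (\<Sum>l\<le>n. Dm i l * g l))
      + (\<Sum>i\<le>n. h i * (f i * (if i = 0 then 1 / h 0 * g i else 0)))
      + (\<Sum>i\<le>n. h i * (f i * (if i = n then - (1 / h n * g i) else 0)))"
    by (simp add: sum.distrib[symmetric] algebra_simps)
  also have "\<dots> = 0" using e s1 s2 by simp
  finally show ?thesis .
qed

lemma sbp_Xd:
  assumes sbp: "SBP n h Dp Dm" and n: "n \<ge> 1"
  shows "(\<Sum>i\<le>n. h i * Xd n h i (Jf i) (mf i) (uf i)
            (\<lambda>a. \<Sum>l\<le>n. Dm i l * flux (Jf l) (mf l) (uf l) a)
            (\<lambda>a. \<Sum>l\<le>n. Dp i l * uf l a)) = 0"
proof -
  have "(\<Sum>i\<le>n. h i * Xd n h i (Jf i) (mf i) (uf i)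
            (\<lambda>a. \<Sum>l\<le>n. Dm i l * flux (Jf l) (mf l) (uf l) a)
            (\<lambda>a. \<Sum>l\<le>n. Dp i l * uf l a))
     = (\<Sum>a<3. \<Sum>i\<le>n. h i * ((\<lambda>i. uf i a) i * (\<Sum>l\<le>n. Dm i l * (\<lambda>l. flux (Jf l) (mf l) (uf l) a) l)
         + (\<Sum>l\<le>n. Dp i l * (\<lambda>i. uf i a) l) * (\<lambda>l. flux (Jf l) (mf l) (uf l) a) i
     + (\<lambda>i. uf i a) i * ((if i = 0 then 1 / h 0 * (\<lambda>l. flux (Jf l) (mf l) (uf l) a) i else 0)
        + (if i = n then - (1 / h n * (\<lambda>l. flux (Jf l) (mf l) (uf l) a) i) else 0))))"
    unfolding Xd_def sum_distrib_left
    by (subst sum.swap) (rule sum.cong; auto intro!: sum.cong split: if_splits)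
  also have "\<dots> = 0"
    by (rule sum.neutral, intro ballI, rule sbp1d[OF sbp n])
  finally show ?thesis .
qed

lemma Pinv_sym:
  assumes "\<And>a b. a<6 \<Longrightarrow> b<6 \<Longrightarrow> Sm a b = Sm b a"
  shows "(\<Sum>c<9. u c * Pinv_apply Jv r Sm v c) = (\<Sum>c<9. v c * Pinv_apply Jv r Sm u c)"
proof -
  have "(\<Sum>a<6. u (a+3) * (Jv * (\<Sum>b<6. Sm a b * v (b+3))))
       = Jv * (\<Sum>a<6. \<Sum>b<6. u (a+3) * Sm a b * v (b+3))"
    by (simp add: sum_distrib_left algebra_simps)
  also have "\<dots> = Jv * (\<Sum>b<6. \<Sum>a<6. u (a+3) * Sm a b * v (b+3))"
    by (subst sum.swap) simp
  also have "\<dots> = Jv * (\<Sum>b<6. \<Sum>a<6. v (b+3) * Sm b a * u (a+3))"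
    using assms by (intro arg_cong[where f="(*) Jv"] sum.cong refl) (simp add: algebra_simps)
  also have "\<dots> = (\<Sum>b<6. v (b+3) * (Jv * (\<Sum>a<6. Sm b a * u (a+3))))"
    by (simp add: sum_distrib_left algebra_simps)
  finally have e: "(\<Sum>a<6. u (a+3) * (Jv * (\<Sum>b<6. Sm a b * v (b+3))))
     = (\<Sum>b<6. v (b+3) * (Jv * (\<Sum>a<6. Sm b a * u (a+3))))" .
  show ?thesis
    unfolding sum9[of "\<lambda>c. u c * Pinv_apply Jv r Sm v c"] sum9[of "\<lambda>c. v c * Pinv_apply Jv r Sm u c"]
    using e by (simp add: Pinv_apply_def eval_nat_numeral)
qed

lemma Pinv_deriv:
  assumes "\<And>c. c < 9 \<Longrightarrow> ((\<lambda>\<tau>. U \<tau> c) has_real_derivative U' c) (at t)" and "c < 9"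
  shows "((\<lambda>\<tau>. Pinv_apply Jv r Sm (U \<tau>) c) has_real_derivative Pinv_apply Jv r Sm U' c) (at t)"
proof (cases "c < 3")
  case True
  then show ?thesis using assms unfolding Pinv_apply_def
    by (simp, intro DERIV_cmult) simp
next
  case False
  then show ?thesis using assms unfolding Pinv_apply_def
    by (simp, intro DERIV_cmult DERIV_sum) simp
qed

lemma sat_vec_eq: "metric_norm m \<noteq> 0 \<Longrightarrow> sat_vec J m u c = (if c < 3 then flux J m u c else 0)"
  using sat_vec_flux by (simp add: sat_vec_def)

lemma swap3: "(\<Sum>i\<in>A. \<Sum>j\<in>B. \<Sum>k\<in>C. f i j k) = (\<Sum>j\<in>B. \<Sum>k\<in>C. \<Sum>i\<in>A. (f i j k::real))"
proof -
  have "(\<Sum>j\<in>B. \<Sum>k\<in>C. \<Sum>i\<in>A. f i j k) = (\<Sum>j\<in>B. \<Sum>i\<in>A. \<Sum>k\<in>C. f i j k)"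
    by (rule sum.cong[OF refl], rule sum.swap)
  also have "\<dots> = (\<Sum>i\<in>A. \<Sum>j\<in>B. \<Sum>k\<in>C. f i j k)" by (rule sum.swap)
  finally show ?thesis by simp
qed

lemma pointwise:
  assumes "metric_norm (mq i j k) \<noteq> 0" "metric_norm (mr i j k) \<noteq> 0" "metric_norm (ms i j k) \<noteq> 0"
  shows "(\<Sum>c<9. U i j k c * rhs nq nr ns hq hr hs Dpq Dmq Dpr Dmr Dps Dms J mq mr ms U i j k c)
   = Xd nq hq i (J i j k) (mq i j k) (U i j k)
        (\<lambda>a. \<Sum>l\<le>nq. Dmq i l * flux (J l j k) (mq l j k) (U l j k) a)
        (\<lambda>a. \<Sum>l\<le>nq. Dpq i l * U l j k a)
   + Xd nr hr j (J i j k) (mr i j k) (U i j k)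
        (\<lambda>a. \<Sum>l\<le>nr. Dmr j l * flux (J i l k) (mr i l k) (U i l k) a)
        (\<lambda>a. \<Sum>l\<le>nr. Dpr j l * U i l k a)
   + Xd ns hs k (J i j k) (ms i j k) (U i j k)
        (\<lambda>a. \<Sum>l\<le>ns. Dms k l * flux (J i j l) (ms i j l) (U i j l) a)
        (\<lambda>a. \<Sum>l\<le>ns. Dps k l * U i j l a)"
  unfolding rhs_def sat_def distrib_left sum.distrib Bterm_flux
    sat_vec_eq[OF assms(1)] sat_vec_eq[OF assms(2)] sat_vec_eq[OF assms(3)]
  by (simp add: sum9 Dq_def Dr_def Ds_def flux_ge3 Xd_def eval_nat_numeral
       algebra_simps split del: if_split cong: if_cong)
theorem theorem5p1:
  fixes nq nr ns :: nat
    and hq hr hs :: "nat \<Rightarrow> real"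
    and Dpq Dmq Dpr Dmr Dps Dms :: mat
    and J rho :: grid
    and mq mr ms :: "nat \<Rightarrow> nat \<Rightarrow> nat \<Rightarrow> nat \<Rightarrow> real"
    and S :: "nat \<Rightarrow> nat \<Rightarrow> nat \<Rightarrow> mat"
    and Q Q' :: "real \<Rightarrow> nat \<Rightarrow> nat \<Rightarrow> nat \<Rightarrow> nat \<Rightarrow> real"
    and T :: "real set"
  assumes n_pos: "nq \<ge> 1" "nr \<ge> 1" "ns \<ge> 1"
    and sbp: "SBP nq hq Dpq Dmq" "SBP nr hr Dpr Dmr" "SBP ns hs Dps Dms"
    and J_pos: "\<And>i j k. i \<le> nq \<Longrightarrow> j \<le> nr \<Longrightarrow> k \<le> ns \<Longrightarrow> J i j k > 0"
    and rho_pos: "\<And>i j k. i \<le> nq \<Longrightarrow> j \<le> nr \<Longrightarrow> k \<le> ns \<Longrightarrow> rho i j k > 0"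
    and metric_nz: "\<And>i j k. i \<le> nq \<Longrightarrow> j \<le> nr \<Longrightarrow> k \<le> ns \<Longrightarrow>
                      (\<exists>a<3. mq i j k a \<noteq> 0) \<and> (\<exists>a<3. mr i j k a \<noteq> 0) \<and> (\<exists>a<3. ms i j k a \<noteq> 0)"
    and S_sym: "\<And>i j k a b. i \<le> nq \<Longrightarrow> j \<le> nr \<Longrightarrow> k \<le> ns \<Longrightarrow> a < 6 \<Longrightarrow> b < 6 \<Longrightarrow>
                  S i j k a b = S i j k b a"
    and S_pd: "\<And>i j k x. i \<le> nq \<Longrightarrow> j \<le> nr \<Longrightarrow> k \<le> ns \<Longrightarrow> (\<exists>a<6. x a \<noteq> 0) \<Longrightarrow>
                  (\<Sum>a<6. \<Sum>b<6. x a * S i j k a b * x b) > 0"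
    and T_open: "open T"
    and deriv: "\<And>t i j k c. t \<in> T \<Longrightarrow> i \<le> nq \<Longrightarrow> j \<le> nr \<Longrightarrow> k \<le> ns \<Longrightarrow> c < 9 \<Longrightarrow>
                  ((\<lambda>\<tau>. Q \<tau> i j k c) has_real_derivative Q' t i j k c) (at t)"
    and scheme: "\<And>t i j k c. t \<in> T \<Longrightarrow> i \<le> nq \<Longrightarrow> j \<le> nr \<Longrightarrow> k \<le> ns \<Longrightarrow> c < 9 \<Longrightarrow>
                  Pinv_apply (J i j k) (rho i j k) (S i j k) (Q' t i j k) c
                  = rhs nq nr ns hq hr hs Dpq Dmq Dpr Dmr Dps Dms J mq mr ms (Q t) i j k c"
  shows "\<And>t. t \<in> T \<Longrightarrow>
           ((\<lambda>\<tau>. energy nq nr ns hq hr hs J rho S (Q \<tau>)) has_real_derivative 0) (at t)"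
proof -
  fix t assume tT: "t \<in> T"
  let ?PQ = "\<lambda>i j k c. Pinv_apply (J i j k) (rho i j k) (S i j k) (Q t i j k) c"
  let ?PQ' = "\<lambda>i j k c. Pinv_apply (J i j k) (rho i j k) (S i j k) (Q' t i j k) c"
  let ?D = "1/2 * (\<Sum>i\<le>nq. \<Sum>j\<le>nr. \<Sum>k\<le>ns. hq i * hr j * hs k *
        (\<Sum>c<9. Q' t i j k c * ?PQ i j k c + ?PQ' i j k c * Q t i j k c))"
  have d: "((\<lambda>\<tau>. energy nq nr ns hq hr hs J rho S (Q \<tau>)) has_real_derivative ?D) (at t)"
    unfolding energy_def
    apply (intro DERIV_cmult DERIV_sum DERIV_mult)
    subgoal by (rule deriv[OF tT]; simp)
    subgoal by (rule Pinv_deriv[where U="\<lambda>\<tau>. Q \<tau> _ _ _"]; (rule deriv[OF tT])?; simp)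
    done
  define X where "X = (\<lambda>i j k. Xd nq hq i (J i j k) (mq i j k) (Q t i j k)
        (\<lambda>a. \<Sum>l\<le>nq. Dmq i l * flux (J l j k) (mq l j k) (Q t l j k) a)
        (\<lambda>a. \<Sum>l\<le>nq. Dpq i l * Q t l j k a)
   + Xd nr hr j (J i j k) (mr i j k) (Q t i j k)
        (\<lambda>a. \<Sum>l\<le>nr. Dmr j l * flux (J i l k) (mr i l k) (Q t i l k) a)
        (\<lambda>a. \<Sum>l\<le>nr. Dpr j l * Q t i l k a)
   + Xd ns hs k (J i j k) (ms i j k) (Q t i j k)
        (\<lambda>a. \<Sum>l\<le>ns. Dms k l * flux (J i j l) (ms i j l) (Q t i j l) a)
        (\<lambda>a. \<Sum>l\<le>ns. Dps k l * Q t i j l a))"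
  have pt: "(\<Sum>c<9. Q' t i j k c * ?PQ i j k c + ?PQ' i j k c * Q t i j k c) = 2 * X i j k"
    if ijk: "i \<le> nq" "j \<le> nr" "k \<le> ns" for i j k
  proof -
    have sym: "(\<Sum>c<9. Q' t i j k c * ?PQ i j k c) = (\<Sum>c<9. Q t i j k c * ?PQ' i j k c)"
      by (rule Pinv_sym) (rule S_sym[OF ijk]; simp)
    have sym2: "(\<Sum>c<9. Q' t i j k c * ?PQ i j k c) = (\<Sum>c<9. ?PQ' i j k c * Q t i j k c)"
      unfolding sym by (simp add: mult.commute)
    have sch: "(\<Sum>c<9. ?PQ' i j k c * Q t i j k c)
       = (\<Sum>c<9. Q t i j k c * rhs nq nr ns hq hr hs Dpq Dmq Dpr Dmr Dps Dms J mq mr ms (Q t) i j k c)"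
      by (rule sum.cong[OF refl]) (simp add: scheme[OF tT ijk] mult.commute)
    have mz: "metric_norm (mq i j k) \<noteq> 0" "metric_norm (mr i j k) \<noteq> 0" "metric_norm (ms i j k) \<noteq> 0"
      using metric_nz[OF ijk] mn by auto
    show ?thesis
      unfolding sum.distrib sym2 sch pointwise[where mq=mq and mr=mr and ms=ms and i=i and j=j and k=k, OF mz] X_def by simp
  qed
  have "?D = (\<Sum>i\<le>nq. \<Sum>j\<le>nr. \<Sum>k\<le>ns. hq i * hr j * hs k * X i j k)"
    by (simp add: pt sum_distrib_left mult.assoc)
  also have "\<dots> = 0"
  proof -
    have A: "(\<Sum>i\<le>nq. \<Sum>j\<le>nr. \<Sum>k\<le>ns. hq i * hr j * hs k * Xd nq hq i (J i j k) (mq i j k) (Q t i j k)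
        (\<lambda>a. \<Sum>l\<le>nq. Dmq i l * flux (J l j k) (mq l j k) (Q t l j k) a)
        (\<lambda>a. \<Sum>l\<le>nq. Dpq i l * Q t l j k a)) = 0"
    proof -
      have "(\<Sum>i\<le>nq. \<Sum>j\<le>nr. \<Sum>k\<le>ns. hq i * hr j * hs k * Xd nq hq i (J i j k) (mq i j k) (Q t i j k)
        (\<lambda>a. \<Sum>l\<le>nq. Dmq i l * flux (J l j k) (mq l j k) (Q t l j k) a)
        (\<lambda>a. \<Sum>l\<le>nq. Dpq i l * Q t l j k a))
        = (\<Sum>j\<le>nr. \<Sum>k\<le>ns. hr j * hs k * (\<Sum>i\<le>nq. hq i * Xd nq hq i (J i j k) (mq i j k) (Q t i j k)
        (\<lambda>a. \<Sum>l\<le>nq. Dmq i l * flux (J l j k) (mq l j k) (Q t l j k) a)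
        (\<lambda>a. \<Sum>l\<le>nq. Dpq i l * Q t l j k a)))"
        apply (subst swap3)
        apply (simp add: sum_distrib_left algebra_simps)
        done
      also have "\<dots> = 0"
        by (simp add: sbp_Xd[OF sbp(1) n_pos(1), where Jf="\<lambda>i. J i _ _" and mf="\<lambda>i. mq i _ _" and uf="\<lambda>i. Q t i _ _"])
      finally show ?thesis .
    qed
    have B: "(\<Sum>i\<le>nq. \<Sum>j\<le>nr. \<Sum>k\<le>ns. hq i * hr j * hs k * Xd nr hr j (J i j k) (mr i j k) (Q t i j k)
        (\<lambda>a. \<Sum>l\<le>nr. Dmr j l * flux (J i l k) (mr i l k) (Q t i l k) a)
        (\<lambda>a. \<Sum>l\<le>nr. Dpr j l * Q t i l k a)) = 0"
    proof -
      have "(\<Sum>i\<le>nq. \<Sum>j\<le>nr. \<Sum>k\<le>ns. hq i * hr j * hs k * Xd nr hr j (J i j k) (mr i j k) (Q t i j k)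
        (\<lambda>a. \<Sum>l\<le>nr. Dmr j l * flux (J i l k) (mr i l k) (Q t i l k) a)
        (\<lambda>a. \<Sum>l\<le>nr. Dpr j l * Q t i l k a))
        = (\<Sum>i\<le>nq. \<Sum>k\<le>ns. hq i * hs k * (\<Sum>j\<le>nr. hr j * Xd nr hr j (J i j k) (mr i j k) (Q t i j k)
        (\<lambda>a. \<Sum>l\<le>nr. Dmr j l * flux (J i l k) (mr i l k) (Q t i l k) a)
        (\<lambda>a. \<Sum>l\<le>nr. Dpr j l * Q t i l k a)))"
        apply (rule sum.cong[OF refl])
        apply (subst sum.swap)
        apply (simp add: sum_distrib_left algebra_simps)
        done
      also have "\<dots> = 0"
        by (simp add: sbp_Xd[OF sbp(2) n_pos(2), where Jf="\<lambda>j. J _ j _" and mf="\<lambda>j. mr _ j _" and uf="\<lambda>j. Q t _ j _"])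
      finally show ?thesis .
    qed
    have C: "(\<Sum>i\<le>nq. \<Sum>j\<le>nr. \<Sum>k\<le>ns. hq i * hr j * hs k * Xd ns hs k (J i j k) (ms i j k) (Q t i j k)
        (\<lambda>a. \<Sum>l\<le>ns. Dms k l * flux (J i j l) (ms i j l) (Q t i j l) a)
        (\<lambda>a. \<Sum>l\<le>ns. Dps k l * Q t i j l a)) = 0"
    proof -
      have "(\<Sum>i\<le>nq. \<Sum>j\<le>nr. \<Sum>k\<le>ns. hq i * hr j * hs k * Xd ns hs k (J i j k) (ms i j k) (Q t i j k)
        (\<lambda>a. \<Sum>l\<le>ns. Dms k l * flux (J i j l) (ms i j l) (Q t i j l) a)
        (\<lambda>a. \<Sum>l\<le>ns. Dps k l * Q t i j l a))
        = (\<Sum>i\<le>nq. \<Sum>j\<le>nr. hq i * hr j * (\<Sum>k\<le>ns. hs k * Xd ns hs k (J i j k) (ms i j k) (Q t i j k)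
        (\<lambda>a. \<Sum>l\<le>ns. Dms k l * flux (J i j l) (ms i j l) (Q t i j l) a)
        (\<lambda>a. \<Sum>l\<le>ns. Dps k l * Q t i j l a)))"
        by (simp add: sum_distrib_left algebra_simps)
      also have "\<dots> = 0"
        by (simp add: sbp_Xd[OF sbp(3) n_pos(3), where Jf="\<lambda>k. J _ _ k" and mf="\<lambda>k. ms _ _ k" and uf="\<lambda>k. Q t _ _ k"])
      finally show ?thesis .
    qed
    show ?thesis using A B C unfolding X_def distrib_left sum.distrib by simp
  qed
  finally have "?D = 0" .
  with d show "((\<lambda>\<tau>. energy nq nr ns hq hr hs J rho S (Q \<tau>)) has_real_derivative 0) (at t)" by simp
qed

end
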